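(* In the setting of the context, assume $\frac{\ln 2}{\phi}-d^2\ge0$ and let $\nu=\sqrt{\frac{\ln 2}{\phi}-d^2}$, with $\nu\le D_{\rm L}$. Then $$\mathbb{P}(\Delta_{\rm sum}\ge0)\ge\begin{cases}1-\dfrac{2\nu^2}{D_{\rm L}^2}, & \nu\le\dfrac{D_{\rm L}}{2},\\[2mm] 2\left(1-\dfrac{\nu}{D_{\rm L}}\right)^2, & \dfrac{D_{\rm L}}{2}<\nu\le D_{\rm L}.\end{cases}$$
   Context: Fix constants $D_{\rm L},d,\phi,\rho,\eta>0$. Two users are located at $(x_1,0,0)$ and $(x_2,0,0)$ with $x_1,x_2$ independent, $x_1$ uniform on $[-D_{\rm L}/2,0]$, $x_2$ uniform on $[0,D_{\rm L}/2]$. Let $z=x_2-x_1$, $P=e^{-\phi(z^2+d^2)}$ (probability that an interference LoS link is present) and $S=\rho\eta/d^2$. Each user's (EDMA) rate is $$R=P\log_2\!\left(1+\frac{S}{\frac{\rho\eta}{z^2+d^2}+1}\right)+(1-P)\log_2(1+S),$$ the EDMA sum rate is $R^{\rm EDMA}=2R$, the TDMA sum rate is $R^{\rm TDMA}=\log_2(1+S)$, and $\Delta_{\rm sum}=R^{\rm EDMA}-R^{\rm TDMA}$ (a random variable through $x_1,x_2$). *)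

theory Defs
  imports "HOL-Probability.Probability"
begin

definition P_los :: "real \<Rightarrow> real \<Rightarrow> real \<Rightarrow> real \<Rightarrow> real" where
  "P_los \<phi> d x1 x2 = exp (- \<phi> * ((x2 - x1)\<^sup>2 + d\<^sup>2))"

definition snr :: "real \<Rightarrow> real \<Rightarrow> real \<Rightarrow> real" where
  "snr \<rho> \<eta> d = \<rho> * \<eta> / d\<^sup>2"

definition rate_user :: "real \<Rightarrow> real \<Rightarrow> real \<Rightarrow> real \<Rightarrow> real \<Rightarrow> real \<Rightarrow> real" where
  "rate_user \<phi> \<rho> \<eta> d x1 x2 =
     (let P = P_los \<phi> d x1 x2; S = snr \<rho> \<eta> d; z = x2 - x1 in
      P * log 2 (1 + S / (\<rho> * \<eta> / (z\<^sup>2 + d\<^sup>2) + 1)) + (1 - P) * log 2 (1 + S))"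

definition R_EDMA :: "real \<Rightarrow> real \<Rightarrow> real \<Rightarrow> real \<Rightarrow> real \<Rightarrow> real \<Rightarrow> real" where
  "R_EDMA \<phi> \<rho> \<eta> d x1 x2 = 2 * rate_user \<phi> \<rho> \<eta> d x1 x2"

definition R_TDMA :: "real \<Rightarrow> real \<Rightarrow> real \<Rightarrow> real" where
  "R_TDMA \<rho> \<eta> d = log 2 (1 + snr \<rho> \<eta> d)"

definition Delta_sum :: "real \<Rightarrow> real \<Rightarrow> real \<Rightarrow> real \<Rightarrow> real \<Rightarrow> real \<Rightarrow> real" where
  "Delta_sum \<phi> \<rho> \<eta> d x1 x2 = R_EDMA \<phi> \<rho> \<eta> d x1 x2 - R_TDMA \<rho> \<eta> d"

definition user_law :: "real \<Rightarrow> (real \<times> real) measure" where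
  "user_law DL = uniform_measure lborel {-DL/2..0} \<Otimes>\<^sub>M uniform_measure lborel {0..DL/2}"

end

theory Submission
  imports Defs
begin

lemma key:
  fixes h \<nu> I :: real
  assumes h: "h > 0" and nu: "\<nu> \<ge> 0" and I0: "I \<ge> 0"
    and I: "((\<lambda>x. max 0 (h - max 0 (x + \<nu>))) has_integral I) {-h..0}"
  shows "emeasure (user_law (2*h)) {p. \<nu> \<le> snd p - fst p} = ennreal (I / h\<^sup>2)"
proof -
  let ?g = "\<lambda>x. max 0 (h - max 0 (x + \<nu>))"
  define U1 where "U1 = uniform_measure lborel {-h..0::real}"
  define U2 where "U2 = uniform_measure lborel {0..h::real}"
  have M: "user_law (2*h) = U1 \<Otimes>\<^sub>M U2" unfolding user_law_def U1_def U2_def by simp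
  interpret U2: prob_space U2 unfolding U2_def using h
    by (intro prob_space_uniform_measure) auto
  have meas: "{p::real\<times>real. \<nu> \<le> snd p - fst p} \<in> sets (U1 \<Otimes>\<^sub>M U2)"
  proof -
    have "{p::real\<times>real. \<nu> \<le> snd p - fst p} = {p \<in> space (U1 \<Otimes>\<^sub>M U2). \<nu> \<le> snd p - fst p}"
      by (simp add: U1_def U2_def space_pair_measure)
    also have "\<dots> \<in> sets (U1 \<Otimes>\<^sub>M U2)" unfolding U1_def U2_def by measurable
    finally show ?thesis .
  qed
  have sl: "emeasure U2 {y. \<nu> \<le> y - x} = ennreal (?g x / h)" for x
  proof -
    have "{y. \<nu> \<le> y - x} = {x + \<nu>..}" by auto
    moreover have "{0..h} \<inter> {x + \<nu>..} = {max 0 (x+\<nu>)..h}" by auto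
    ultimately show ?thesis unfolding U2_def using h
      by (simp add: emeasure_lborel_Icc_eq divide_ennreal max_def)
  qed
  have "emeasure (user_law (2*h)) {p. \<nu> \<le> snd p - fst p} = (\<integral>\<^sup>+x. ennreal (?g x / h) \<partial>U1)"
    unfolding M by (subst U2.emeasure_pair_measure_alt[OF meas]) (simp add: sl)
  also have "\<dots> = (\<integral>\<^sup>+x. ennreal (?g x / h) * indicator {-h..0} x \<partial>lborel) / ennreal h"
    unfolding U1_def using h by (subst nn_integral_uniform_measure) auto
  also have "(\<integral>\<^sup>+x. ennreal (?g x / h) * indicator {-h..0} x \<partial>lborel) = ennreal (I / h)"
    using h by (intro nn_integral_has_integral_lebesgue' has_integral_divide I) auto
  also have "ennreal (I / h) / ennreal h = ennreal (I / h\<^sup>2)"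
    using h I0 by (simp add: divide_ennreal power2_eq_square)
  finally show ?thesis .
qed
lemma int1:
  fixes h \<nu> :: real assumes "0 \<le> \<nu>" "\<nu> \<le> h"
  shows "((\<lambda>x. max 0 (h - max 0 (x + \<nu>))) has_integral (h\<^sup>2 - \<nu>\<^sup>2/2)) {-h..0}"
proof -
  let ?g = "\<lambda>x. max 0 (h - max 0 (x + \<nu>))"
  have a: "(?g has_integral ((\<lambda>x. h*x) (-\<nu>) - (\<lambda>x. h*x) (-h))) {-h..-\<nu>}"
  proof (subst has_integral_cong)
    show "?g x = h" if "x \<in> {-h..-\<nu>}" for x using that assms by auto
    show "((\<lambda>x. h) has_integral ((\<lambda>x. h*x) (-\<nu>) - (\<lambda>x. h*x) (-h))) {-h..-\<nu>}"
      using assms by (intro fundamental_theorem_of_calculus)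
        (auto intro!: derivative_eq_intros simp: has_real_derivative_iff_has_vector_derivative[symmetric])
  qed
  have b: "(?g has_integral ((\<lambda>x. (h-\<nu>)*x - x\<^sup>2/2) 0 - (\<lambda>x. (h-\<nu>)*x - x\<^sup>2/2) (-\<nu>))) {-\<nu>..0}"
  proof (subst has_integral_cong)
    show "?g x = h - \<nu> - x" if "x \<in> {-\<nu>..0}" for x using that assms by auto
    show "((\<lambda>x. h - \<nu> - x) has_integral ((\<lambda>x. (h-\<nu>)*x - x\<^sup>2/2) 0 - (\<lambda>x. (h-\<nu>)*x - x\<^sup>2/2) (-\<nu>))) {-\<nu>..0}"
      using assms by (intro fundamental_theorem_of_calculus)
        (auto intro!: derivative_eq_intros simp: has_real_derivative_iff_has_vector_derivative[symmetric])
  qed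
  have "(?g has_integral ((\<lambda>x. h*x) (-\<nu>) - (\<lambda>x. h*x) (-h)) + ((\<lambda>x. (h-\<nu>)*x - x\<^sup>2/2) 0 - (\<lambda>x. (h-\<nu>)*x - x\<^sup>2/2) (-\<nu>))) {-h..0}"
    using assms by (intro has_integral_combine[OF _ _ a b]) auto
  moreover have "((\<lambda>x. h*x) (-\<nu>) - (\<lambda>x. h*x) (-h)) + ((\<lambda>x. (h-\<nu>)*x - x\<^sup>2/2) 0 - (\<lambda>x. (h-\<nu>)*x - x\<^sup>2/2) (-\<nu>)) = h\<^sup>2 - \<nu>\<^sup>2/2"
    by (simp add: power2_eq_square algebra_simps)
  ultimately show ?thesis by metis
qed

lemma int2:
  fixes h \<nu> :: real assumes "h < \<nu>" "\<nu> \<le> 2*h"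
  shows "((\<lambda>x. max 0 (h - max 0 (x + \<nu>))) has_integral ((2*h - \<nu>)\<^sup>2/2)) {-h..0}"
proof -
  let ?g = "\<lambda>x. max 0 (h - max 0 (x + \<nu>))"
  have a: "(?g has_integral ((\<lambda>x. (h-\<nu>)*x - x\<^sup>2/2) (h-\<nu>) - (\<lambda>x. (h-\<nu>)*x - x\<^sup>2/2) (-h))) {-h..h-\<nu>}"
  proof (subst has_integral_cong)
    show "?g x = h - \<nu> - x" if "x \<in> {-h..h-\<nu>}" for x using that assms by auto
    show "((\<lambda>x. h - \<nu> - x) has_integral ((\<lambda>x. (h-\<nu>)*x - x\<^sup>2/2) (h-\<nu>) - (\<lambda>x. (h-\<nu>)*x - x\<^sup>2/2) (-h))) {-h..h-\<nu>}"
      using assms by (intro fundamental_theorem_of_calculus)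
        (auto intro!: derivative_eq_intros simp: has_real_derivative_iff_has_vector_derivative[symmetric])
  qed
  have b: "(?g has_integral 0) {h-\<nu>..0}"
  proof (subst has_integral_cong)
    show "?g x = 0" if "x \<in> {h-\<nu>..0}" for x using that assms by auto
    show "((\<lambda>x. 0::real) has_integral 0) {h-\<nu>..0}" by simp
  qed
  have "(?g has_integral ((\<lambda>x. (h-\<nu>)*x - x\<^sup>2/2) (h-\<nu>) - (\<lambda>x. (h-\<nu>)*x - x\<^sup>2/2) (-h)) + 0) {-h..0}"
    using assms by (intro has_integral_combine[OF _ _ a b]) auto
  moreover have "((\<lambda>x. (h-\<nu>)*x - x\<^sup>2/2) (h-\<nu>) - (\<lambda>x. (h-\<nu>)*x - x\<^sup>2/2) (-h)) + 0 = (2*h - \<nu>)\<^sup>2/2"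
    by (simp add: power2_eq_square field_simps)
  ultimately show ?thesis by metis
qed

lemma Delta_nonneg:
  fixes d \<phi> \<rho> \<eta> \<nu> x1 x2 :: real
  assumes "d > 0" "\<phi> > 0" "\<rho> > 0" "\<eta> > 0" "\<nu> = sqrt (ln 2 / \<phi> - d\<^sup>2)"
    "ln 2 / \<phi> - d\<^sup>2 \<ge> 0" "\<nu> \<le> x2 - x1"
  shows "Delta_sum \<phi> \<rho> \<eta> d x1 x2 \<ge> 0"
proof -
  define z where "z = x2 - x1"
  define P where "P = P_los \<phi> d x1 x2"
  define S where "S = snr \<rho> \<eta> d"
  define a where "a = log 2 (1 + S / (\<rho> * \<eta> / (z\<^sup>2 + d\<^sup>2) + 1))"
  define b where "b = log 2 (1 + S)"
  have S0: "S > 0" unfolding S_def snr_def using assms by auto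
  have "\<rho> * \<eta> / (z\<^sup>2 + d\<^sup>2) \<ge> 0" using assms by simp
  hence "0 < S / (\<rho> * \<eta> / (z\<^sup>2 + d\<^sup>2) + 1)"
    using S0 by (intro divide_pos_pos) auto
  hence a0: "a \<ge> 0" unfolding a_def by simp
  have b0: "b \<ge> 0" unfolding b_def using S0 by simp
  have "\<nu> \<ge> 0" using assms by simp
  hence "\<nu>\<^sup>2 \<le> z\<^sup>2" using assms unfolding z_def by (intro power_mono) auto
  hence "ln 2 / \<phi> - d\<^sup>2 \<le> z\<^sup>2" using assms by simp
  hence "ln 2 \<le> \<phi> * (z\<^sup>2 + d\<^sup>2)" using assms by (simp add: field_simps)
  hence "P \<le> exp (- ln 2)" unfolding P_def P_los_def z_def by simp
  hence P2: "P \<le> 1/2" by (simp add: exp_minus)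
  have P0: "P \<ge> 0" unfolding P_def P_los_def by simp
  have "Delta_sum \<phi> \<rho> \<eta> d x1 x2 = 2 * (P * a + (1 - P) * b) - b"
    unfolding Delta_sum_def R_EDMA_def R_TDMA_def rate_user_def Let_def a_def b_def P_def S_def z_def
    by simp
  also have "\<dots> = 2 * P * a + (1 - 2 * P) * b" by (simp add: algebra_simps)
  also have "\<dots> \<ge> 0" using P0 P2 a0 b0 by (intro add_nonneg_nonneg mult_nonneg_nonneg) auto
  finally show ?thesis .
qed

theorem lemma3:
  fixes DL d \<phi> \<rho> \<eta> :: real
  assumes "DL > 0" "d > 0" "\<phi> > 0" "\<rho> > 0" "\<eta> > 0"
    and "ln 2 / \<phi> - d\<^sup>2 \<ge> 0"
    and "sqrt (ln 2 / \<phi> - d\<^sup>2) \<le> DL"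
  shows "let \<nu> = sqrt (ln 2 / \<phi> - d\<^sup>2);
             M = user_law DL
         in measure M {p \<in> space M. Delta_sum \<phi> \<rho> \<eta> d (fst p) (snd p) \<ge> 0}
            \<ge> (if \<nu> \<le> DL / 2 then 1 - 2 * \<nu>\<^sup>2 / DL\<^sup>2 else 2 * (1 - \<nu> / DL)\<^sup>2)"
proof -
  define \<nu> where "\<nu> = sqrt (ln 2 / \<phi> - d\<^sup>2)"
  define h where "h = DL / 2"
  have h0: "h > 0" and DL: "DL = 2 * h" using assms unfolding h_def by auto
  have nu0: "\<nu> \<ge> 0" unfolding \<nu>_def using assms(6) by simp
  define M where "M = user_law DL"
  define A where "A = {p \<in> space M. Delta_sum \<phi> \<rho> \<eta> d (fst p) (snd p) \<ge> 0}"
  define B where "B = {p::real\<times>real. \<nu> \<le> snd p - fst p}"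
  have spM: "space M = UNIV" unfolding M_def user_law_def by (simp add: space_pair_measure)
  have BA: "B \<subseteq> A" unfolding A_def B_def spM
    using Delta_nonneg[OF assms(2-5) \<nu>_def assms(6)] assms(6) by auto
  interpret M: prob_space M unfolding M_def user_law_def using assms
    by (intro prob_space_pair prob_space_uniform_measure) auto
  have Ameas: "A \<in> sets M" unfolding A_def M_def user_law_def
    unfolding Delta_sum_def R_EDMA_def R_TDMA_def rate_user_def Let_def P_los_def snr_def
    by measurable
  have mB: "measure M B \<le> measure M A" using BA Ameas by (rule M.finite_measure_mono)
  have eqB: "measure M B = I / h\<^sup>2" if "((\<lambda>x. max 0 (h - max 0 (x + \<nu>))) has_integral I) {-h..0}" "I \<ge> 0" for I
  proof -
    have "emeasure M B = ennreal (I / h\<^sup>2)" unfolding M_def B_def DL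
      by (rule key[OF h0 nu0 that(2) that(1)])
    thus ?thesis using that(2) by (simp add: M.emeasure_eq_measure)
  qed
  show ?thesis
  proof (cases "\<nu> \<le> DL / 2")
    case True
    hence "\<nu> \<le> h" unfolding h_def .
    moreover have "\<nu>\<^sup>2 \<le> h\<^sup>2" using nu0 calculation by (intro power_mono) auto
    moreover have "0 \<le> \<nu>\<^sup>2" by simp
    ultimately have "h\<^sup>2 - \<nu>\<^sup>2/2 \<ge> 0" "\<nu> \<le> h" by linarith+
    hence "measure M B = (h\<^sup>2 - \<nu>\<^sup>2/2) / h\<^sup>2"
      using nu0 h0 by (intro eqB int1) auto
    also have "\<dots> = 1 - 2 * \<nu>\<^sup>2 / DL\<^sup>2" using h0 unfolding DL by (simp add: field_simps)
    finally show ?thesis using mB True unfolding A_def M_def \<nu>_def Let_def by simp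
  next
    case False
    hence "h < \<nu>" "\<nu> \<le> 2*h" using assms unfolding h_def \<nu>_def by auto
    hence "measure M B = ((2*h - \<nu>)\<^sup>2/2) / h\<^sup>2"
      by (intro eqB int2) auto
    also have "\<dots> = 2 * (1 - \<nu> / DL)\<^sup>2" using h0 unfolding DL by (simp add: field_simps power2_eq_square)
    finally show ?thesis using mB False unfolding A_def M_def \<nu>_def Let_def by simp
  qed
qed
end
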